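(* Assume (A1). Let $g:\mathcal X\to\mathbb R$ and let $u$ be the solution of problem (P) with boundary data $g|_\Gamma$. For $x\in\mathcal X$ let $(X_i)_{i\ge0}$ be the stochastic process started at $X_0=x$ defined as follows: given $X_i$, if $X_i\in\Gamma$ set $X_{i+1}=X_i$; otherwise, independently of everything else, with probability $\alpha$ take $X_{i+1}=y$ with probability $w_{X_iy}/d_{X_i}$, with probability $\frac12(1-\alpha)$ take $X_{i+1}\in\operatorname{argmax}_{y\in N_{X_i}}u(y)$, and with probability $\frac12(1-\alpha)$ take $X_{i+1}\in\operatorname{argmin}_{y\in N_{X_i}\cap\Gamma}g(y)$. Let $\tau=\inf\{i\ge0: X_i\in\Gamma\}$. Then $$u(x)-g(x)\le\mathbb E\big[g(X_\tau)-g(x)\mid X_0=x\big].$$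
   Context: $\mathcal X$ is a finite vertex set and $W=(w_{xy})$ a symmetric matrix of nonnegative weights defining a connected graph, with degrees $d_x=\sum_{y}w_{xy}$ and neighbor sets $N_x=\{y\in\mathcal X:w_{xy}>0\}$. For $p\ge2$, $\alpha=1/(p-1)$, and $$\mathcal L_p u(x)=\alpha\,\frac{1}{d_x}\sum_{y}w_{xy}\big(u(x)-u(y)\big)+(1-\alpha)\Big(u(x)-\tfrac12\big(\max_{N_x}u+\min_{N_x}u\big)\Big).$$ $\Gamma\subset\mathcal X$ is the set of labeled vertices. Problem (P): find $u:\mathcal X\to\mathbb R$ with $\mathcal L_pu(x)=0$ for $x\in\mathcal X\setminus\Gamma$ and $u=g$ on $\Gamma$; since the graph is connected it has a unique solution. Assumption (A1): $\Gamma\cap N_x\neq\varnothing$ for every $x\in\mathcal X$. *)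

theory Defs
  imports "HOL-Probability.Probability"
begin

definition deg :: "('a::finite \<Rightarrow> 'a \<Rightarrow> real) \<Rightarrow> 'a \<Rightarrow> real" where
  "deg w x = (\<Sum>y\<in>UNIV. w x y)"

definition nbrs :: "('a \<Rightarrow> 'a \<Rightarrow> real) \<Rightarrow> 'a \<Rightarrow> 'a set" where
  "nbrs w x = {y. w x y > 0}"

definition weighted_graph :: "('a::finite \<Rightarrow> 'a \<Rightarrow> real) \<Rightarrow> bool" where
  "weighted_graph w \<longleftrightarrow> (\<forall>x y. w x y = w y x) \<and> (\<forall>x y. 0 \<le> w x y)"

definition connected_graph :: "('a::finite \<Rightarrow> 'a \<Rightarrow> real) \<Rightarrow> bool" where
  "connected_graph w \<longleftrightarrow> (\<forall>x y. (x, y) \<in> {(a, b). w a b > 0}\<^sup>*)"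

text \<open>The operator L_p with alpha = 1/(p-1).\<close>
definition Lp :: "real \<Rightarrow> ('a::finite \<Rightarrow> 'a \<Rightarrow> real) \<Rightarrow> ('a \<Rightarrow> real) \<Rightarrow> 'a \<Rightarrow> real" where
  "Lp p w u x =
     (1 / (p - 1)) * ((1 / deg w x) * (\<Sum>y\<in>UNIV. w x y * (u x - u y)))
     + (1 - 1 / (p - 1)) *
       (u x - (1/2) * (Max (u ` nbrs w x) + Min (u ` nbrs w x)))"

definition solves_P :: "real \<Rightarrow> ('a::finite \<Rightarrow> 'a \<Rightarrow> real) \<Rightarrow> 'a set \<Rightarrow> ('a \<Rightarrow> real) \<Rightarrow> ('a \<Rightarrow> real) \<Rightarrow> bool" where
  "solves_P p w \<Gamma> g u \<longleftrightarrow> (\<forall>x. x \<notin> \<Gamma> \<longrightarrow> Lp p w u x = 0) \<and> (\<forall>x\<in>\<Gamma>. u x = g x)"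

definition A1 :: "('a \<Rightarrow> 'a \<Rightarrow> real) \<Rightarrow> 'a set \<Rightarrow> bool" where
  "A1 w \<Gamma> \<longleftrightarrow> (\<forall>x. \<Gamma> \<inter> nbrs w x \<noteq> {})"

definition walk_pmf :: "('a::finite \<Rightarrow> 'a \<Rightarrow> real) \<Rightarrow> 'a \<Rightarrow> 'a pmf" where
  "walk_pmf w x = embed_pmf (\<lambda>y. w x y / deg w x)"

text \<open>One-step transition law from state x, given selectors smax (a point of
  argmax of u over N_x) and smin (a point of argmin of g over N_x \<inter> Gamma).\<close>
definition step_pmf :: "real \<Rightarrow> ('a::finite \<Rightarrow> 'a \<Rightarrow> real) \<Rightarrow> 'a set \<Rightarrow> ('a \<Rightarrow> 'a) \<Rightarrow> ('a \<Rightarrow> 'a) \<Rightarrow> 'a \<Rightarrow> 'a pmf" where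
  "step_pmf p w \<Gamma> smax smin x =
     (if x \<in> \<Gamma> then return_pmf x
      else bind_pmf (bernoulli_pmf (1 / (p - 1))) (\<lambda>b.
        if b then walk_pmf w x
        else bind_pmf (bernoulli_pmf (1/2)) (\<lambda>c. if c then return_pmf (smax x) else return_pmf (smin x))))"

text \<open>Random mapping representation: at each step an independent random map
  F : 'a \<Rightarrow> 'a is drawn, with F z ~ step_pmf z independently over z; X_{i+1} = F_i (X_i).\<close>
definition innov_space :: "real \<Rightarrow> ('a::finite \<Rightarrow> 'a \<Rightarrow> real) \<Rightarrow> 'a set \<Rightarrow> ('a \<Rightarrow> 'a) \<Rightarrow> ('a \<Rightarrow> 'a) \<Rightarrow> ('a \<Rightarrow> 'a) stream measure" where
  "innov_space p w \<Gamma> smax smin =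
     stream_space (measure_pmf (Pi_pmf UNIV undefined (step_pmf p w \<Gamma> smax smin)))"

primrec proc :: "'a \<Rightarrow> ('a \<Rightarrow> 'a) stream \<Rightarrow> nat \<Rightarrow> 'a" where
  "proc x \<omega> 0 = x"
| "proc x \<omega> (Suc i) = (\<omega> !! i) (proc x \<omega> i)"

definition hit_time :: "'a set \<Rightarrow> 'a \<Rightarrow> ('a \<Rightarrow> 'a) stream \<Rightarrow> nat" where
  "hit_time \<Gamma> x \<omega> = (LEAST i. proc x \<omega> i \<in> \<Gamma>)"

end

theory Submission
  imports Defs
begin

lemma (in prob_space) integral_stream_space_real:
  fixes f :: "'a stream \<Rightarrow> real"
  assumes [measurable]: "f \<in> borel_measurable (stream_space M)" and bnd: "\<And>\<omega>. \<bar>f \<omega>\<bar> \<le> B"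
  shows "(\<integral>X. f X \<partial>stream_space M) = (\<integral>x. (\<integral>X. f (x ## X) \<partial>stream_space M) \<partial>M)"
proof -
  interpret S: sequence_space M ..
  interpret P: pair_prob_space M "\<Pi>\<^sub>M i::nat\<in>UNIV. M" ..
  have int: "integrable (M \<Otimes>\<^sub>M S.S) (\<lambda>X. f (to_stream ((\<lambda>(s, \<omega>). case_nat s \<omega>) X)))"
    by (rule P.P.integrable_const_bound[where B=B]) (auto simp: bnd)
  have "(\<integral>X. f X \<partial>stream_space M) = (\<integral>X. f (to_stream X) \<partial>S.S)"
    by (subst stream_space_eq_distr) (simp add: integral_distr)
  also have "\<dots> = (\<integral>X. f (to_stream ((\<lambda>(s, \<omega>). case_nat s \<omega>) X)) \<partial>(M \<Otimes>\<^sub>M S.S))"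
    by (subst S.PiM_iter[symmetric]) (simp add: integral_distr)
  also have "\<dots> = (\<integral>x. \<integral>X. f (to_stream ((\<lambda>(s, \<omega>). case_nat s \<omega>) (x, X))) \<partial>S.S \<partial>M)"
    using P.integral_fst'[OF int] by simp
  also have "\<dots> = (\<integral>x. \<integral>X. f (x ## to_stream X) \<partial>S.S \<partial>M)"
    by (auto intro!: Bochner_Integration.integral_cong simp: to_stream_nat_case)
  also have "\<dots> = (\<integral>x. \<integral>X. f (x ## X) \<partial>stream_space M \<partial>M)"
    by (subst stream_space_eq_distr) (simp add: integral_distr cong: Bochner_Integration.integral_cong)
  finally show ?thesis .
qed

lemma integral_bind_pmf_finite:
  fixes f :: "'b::finite \<Rightarrow> real"
  shows "(\<integral>y. f y \<partial>bind_pmf M N) = (\<integral>x. (\<integral>y. f y \<partial>N x) \<partial>M)"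
proof -
  have "(\<integral>y. f y \<partial>bind_pmf M N) = (\<Sum>y\<in>UNIV. pmf (bind_pmf M N) y *\<^sub>R f y)"
    by (rule integral_measure_pmf) auto
  also have "\<dots> = (\<Sum>y\<in>UNIV. (\<integral>x. pmf (N x) y * f y \<partial>M))"
    by (simp add: pmf_bind)
  also have "\<dots> = (\<integral>x. (\<Sum>y\<in>UNIV. pmf (N x) y * f y) \<partial>M)"
  proof (subst Bochner_Integration.integral_sum)
    fix y
    have "integrable M (\<lambda>x. pmf (N x) y)"
      by (rule measure_pmf.integrable_const_bound[where B=1]) (auto simp: pmf_le_1)
    then show "integrable M (\<lambda>x. pmf (N x) y * f y)" by (rule integrable_mult_left)
  qed simp
  also have "\<dots> = (\<integral>x. (\<integral>y. f y \<partial>N x) \<partial>M)"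
    by (rule Bochner_Integration.integral_cong[OF refl], subst integral_measure_pmf[of UNIV]) auto
  finally show ?thesis .
qed

fun stopped :: "'a set \<Rightarrow> 'a \<Rightarrow> ('a \<Rightarrow> 'a) stream \<Rightarrow> nat \<Rightarrow> 'a" where
  "stopped \<Gamma> z \<omega> 0 = z"
| "stopped \<Gamma> z \<omega> (Suc n) = (if z \<in> \<Gamma> then z else stopped \<Gamma> (shd \<omega> z) (stl \<omega>) n)"

lemma proc_Suc: "proc z \<omega> (Suc i) = proc (shd \<omega> z) (stl \<omega>) i"
  by (induction i) auto

lemma stopped_in: "z \<in> \<Gamma> \<Longrightarrow> stopped \<Gamma> z \<omega> n = z"
  by (cases n) auto

lemma hit_time_0: "z \<in> \<Gamma> \<Longrightarrow> hit_time \<Gamma> z \<omega> = 0"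
  unfolding hit_time_def by (rule Least_eq_0) simp

lemma stopped_hit: "stopped \<Gamma> z \<omega> n \<in> \<Gamma> \<Longrightarrow> stopped \<Gamma> z \<omega> n = proc z \<omega> (hit_time \<Gamma> z \<omega>)"
proof (induction n arbitrary: z \<omega>)
  case 0
  then show ?case by (simp add: hit_time_0)
next
  case (Suc n)
  show ?case
  proof (cases "z \<in> \<Gamma>")
    case True thus ?thesis by (simp add: hit_time_0)
  next
    case False
    let ?z = "shd \<omega> z" and ?\<omega> = "stl \<omega>"
    from Suc.prems False have hin: "stopped \<Gamma> ?z ?\<omega> n \<in> \<Gamma>" by simp
    from Suc.IH[OF hin] have eq: "stopped \<Gamma> ?z ?\<omega> n = proc ?z ?\<omega> (hit_time \<Gamma> ?z ?\<omega>)" .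
    define k where "k = hit_time \<Gamma> ?z ?\<omega>"
    have Pk: "proc z \<omega> (Suc k) \<in> \<Gamma>" using hin eq by (simp add: proc_Suc k_def del: proc.simps)
    have "hit_time \<Gamma> z \<omega> = Suc (LEAST m. proc z \<omega> (Suc m) \<in> \<Gamma>)"
      unfolding hit_time_def by (rule Least_Suc[where P="\<lambda>i. proc z \<omega> i \<in> \<Gamma>", OF Pk]) (simp add: False)
    also have "(LEAST m. proc z \<omega> (Suc m) \<in> \<Gamma>) = k" by (simp add: proc_Suc k_def hit_time_def del: proc.simps)
    finally show ?thesis using eq False by (simp add: proc_Suc k_def del: proc.simps)
  qed
qed

lemma meas_stopped:
  "(\<lambda>\<omega>. stopped \<Gamma> z \<omega> n) \<in> measurable (stream_space (measure_pmf D)) (count_space (UNIV::'a::finite set))"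
proof (induction n arbitrary: z)
  case 0 thus ?case by simp
next
  case (Suc n)
  have "(\<lambda>\<omega>. stopped \<Gamma> (shd \<omega> z) (stl \<omega>) n) \<in> measurable (stream_space (measure_pmf D)) (count_space (UNIV::'a set))"
  proof (rule measurable_compose_countable'[where g="\<lambda>\<omega>. shd \<omega> z" and I=UNIV and f="\<lambda>i \<omega>. stopped \<Gamma> i (stl \<omega>) n"])
    fix i show "(\<lambda>\<omega>. stopped \<Gamma> i (stl \<omega>) n) \<in> measurable (stream_space (measure_pmf D)) (count_space UNIV)"
      by (rule measurable_compose[OF measurable_stl Suc.IH])
  next
    show "(\<lambda>\<omega>. shd \<omega> z) \<in> measurable (stream_space (measure_pmf D)) (count_space UNIV)"
      by (rule measurable_compose[OF measurable_shd]) simp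
  qed (auto intro: countable_finite)
  then show ?case by (cases "z \<in> \<Gamma>") auto
qed

lemma meas_proc:
  "(\<lambda>\<omega>. proc z \<omega> i) \<in> measurable (stream_space (measure_pmf D)) (count_space (UNIV::'a::finite set))"
proof (induction i)
  case 0 thus ?case by simp
next
  case (Suc i)
  have "(\<lambda>\<omega>. (\<omega> !! i) (proc z \<omega> i)) \<in> measurable (stream_space (measure_pmf D)) (count_space (UNIV::'a set))"
  proof (rule measurable_compose_countable'[where g="\<lambda>\<omega>. proc z \<omega> i" and I=UNIV and f="\<lambda>j \<omega>. (\<omega> !! i) j"])
    fix j show "(\<lambda>\<omega>. (\<omega> !! i) j) \<in> measurable (stream_space (measure_pmf D)) (count_space UNIV)"
      by (rule measurable_compose[OF measurable_snth]) simp
  qed (use Suc in \<open>auto intro: countable_finite\<close>)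
  then show ?case by simp
qed

lemma meas_hitproc:
  "(\<lambda>\<omega>. proc z \<omega> (hit_time \<Gamma> z \<omega>)) \<in> measurable (stream_space (measure_pmf D)) (count_space (UNIV::'a::finite set))"
proof (rule measurable_compose_countable'[where g="\<lambda>\<omega>. hit_time \<Gamma> z \<omega>" and I=UNIV and f="\<lambda>j \<omega>. proc z \<omega> j"])
  show "(\<lambda>\<omega>. hit_time \<Gamma> z \<omega>) \<in> measurable (stream_space (measure_pmf D)) (count_space UNIV)"
    unfolding hit_time_def
  proof (rule measurable_Least)
    fix i
    show "(\<lambda>\<omega>. proc z \<omega> i \<in> \<Gamma>) \<in> measurable (stream_space (measure_pmf D)) (count_space UNIV)"
      by (rule measurable_compose[OF meas_proc]) simp
  qed
qed (auto intro: meas_proc)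

lemma meas_real:
  fixes h :: "'a::finite \<Rightarrow> real"
  assumes "X \<in> measurable M (count_space UNIV)"
  shows "(\<lambda>\<omega>. h (X \<omega>)) \<in> borel_measurable M"
  by (rule measurable_compose[OF assms]) simp


lemma deg_pos: assumes "weighted_graph w" "y \<in> nbrs w z" shows "0 < deg w z"
  unfolding deg_def using assms by (intro sum_pos2[where i=y]) (auto simp: weighted_graph_def nbrs_def)

lemma pmf_walk: assumes "weighted_graph w" "0 < deg w z"
  shows "pmf (walk_pmf w z) y = w z y / deg w z"
  unfolding walk_pmf_def
proof (rule pmf_embed_pmf)
  show "\<And>x. 0 \<le> w z x / deg w z" using assms by (auto simp: weighted_graph_def)
  have "(\<Sum>x\<in>UNIV. w z x / deg w z) = 1"
    using assms by (simp add: sum_divide_distrib[symmetric] deg_def)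
  then show "(\<integral>\<^sup>+ x. ennreal (w z x / deg w z) \<partial>count_space UNIV) = 1"
    using assms by (subst nn_integral_count_space_finite) (auto simp: weighted_graph_def)
qed

lemma integral_walk: assumes "weighted_graph w" "0 < deg w z"
  shows "(\<integral>y. f y \<partial>walk_pmf w z) = (\<Sum>y\<in>UNIV. w z y * f y) / deg w z"
  by (subst integral_measure_pmf[of UNIV]) (auto simp: pmf_walk[OF assms] sum_divide_distrib)

lemma integral_step:
  assumes "weighted_graph w" "0 < deg w z" "z \<notin> \<Gamma>" "0 \<le> 1/(p-1)" "1/(p-1) \<le> (1::real)"
  shows "(\<integral>y. f y \<partial>step_pmf p w \<Gamma> smax smin z) =
     1/(p-1) * ((\<Sum>y\<in>UNIV. w z y * f y) / deg w z) + (1 - 1/(p-1)) * (f (smax z) / 2 + f (smin z) / 2)"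
  using assms unfolding step_pmf_def
  by (simp add: integral_bind_pmf_finite integral_walk)


lemma step_ineq:
  assumes wg: "weighted_graph w" and p: "p \<ge> 2" and sol: "solves_P p w \<Gamma> g u" and zn: "z \<notin> \<Gamma>"
   and smax: "smax z \<in> nbrs w z" "\<forall>y\<in>nbrs w z. u y \<le> u (smax z)" and smin: "smin z \<in> nbrs w z"
  shows "u z \<le> (\<integral>y. u y \<partial>step_pmf p w \<Gamma> smax smin z)"
proof -
  define \<alpha> where "\<alpha> = 1/(p-1)"
  have a0: "0 < \<alpha>" "\<alpha> \<le> 1" using p by (auto simp: \<alpha>_def field_simps)
  have dpos: "0 < deg w z" by (rule deg_pos[OF wg smax(1)])
  define S where "S = (\<Sum>y\<in>UNIV. w z y * u y)"
  have fin: "finite (nbrs w z)" by simp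
  have Mx: "Max (u ` nbrs w z) = u (smax z)" by (rule Max_eqI) (use smax fin in auto)
  have Mn: "Min (u ` nbrs w z) \<le> u (smin z)" using smin fin by (intro Min_le) auto
  have sumeq: "(\<Sum>y\<in>UNIV. w z y * (u z - u y)) = deg w z * u z - S"
    by (simp add: S_def deg_def right_diff_distrib sum_subtractf sum_distrib_left mult.commute)
  have L: "\<alpha> * ((1/deg w z) * (deg w z * u z - S)) + (1-\<alpha>) * (u z - (1/2) * (u (smax z) + Min (u ` nbrs w z))) = 0"
    using sol zn sumeq Mx unfolding solves_P_def Lp_def \<alpha>_def by auto
  have e1: "\<alpha> * ((1/deg w z) * (deg w z * u z - S)) = \<alpha> * u z - \<alpha> * (S / deg w z)"
    using dpos by (simp add: field_simps)
  have ueq: "u z = \<alpha> * (S/deg w z) + (1-\<alpha>) * ((1/2) * (u (smax z) + Min (u ` nbrs w z)))"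
    using L unfolding e1 by (simp add: algebra_simps)
  have "(1/2) * (u (smax z) + Min (u ` nbrs w z)) \<le> u (smax z)/2 + u (smin z)/2" using Mn by simp
  then have "(1-\<alpha>) * ((1/2) * (u (smax z) + Min (u ` nbrs w z))) \<le> (1-\<alpha>) * (u (smax z)/2 + u (smin z)/2)"
    by (rule mult_left_mono) (use a0 in simp)
  then have "u z \<le> \<alpha> * (S/deg w z) + (1-\<alpha>) * (u (smax z)/2 + u (smin z)/2)"
    using ueq by linarith
  also have "\<dots> = (\<integral>y. u y \<partial>step_pmf p w \<Gamma> smax smin z)"
    using integral_step[OF wg dpos zn, of p smax smin u] a0 by (simp add: S_def \<alpha>_def)
  finally show ?thesis .
qed


lemma step_pos:
  assumes wg: "weighted_graph w" and p: "p \<ge> 2" and zn: "z \<notin> \<Gamma>"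
    and smin: "smin z \<in> nbrs w z \<inter> \<Gamma>"
  shows "0 < measure_pmf.prob (step_pmf p w \<Gamma> smax smin z) \<Gamma>"
proof -
  have a0: "0 < 1/(p-1)" "1/(p-1) \<le> (1::real)" using p by (auto simp: field_simps)
  have dpos: "0 < deg w z" using deg_pos[OF wg] smin by blast
  have T: "True \<in> set_pmf (bernoulli_pmf (1/(p-1)))" using a0 by (simp add: set_pmf_iff)
  have W: "smin z \<in> set_pmf (walk_pmf w z)"
    using smin dpos by (simp add: set_pmf_iff pmf_walk[OF wg dpos] nbrs_def)
  have "smin z \<in> set_pmf (step_pmf p w \<Gamma> smax smin z)"
    unfolding step_pmf_def using zn T W by auto
  then show ?thesis using smin by (intro measure_pmf_posI) auto
qed

lemma sub_stopped:
  fixes st :: "'a::finite \<Rightarrow> 'a pmf" and u :: "'a \<Rightarrow> real"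
  assumes step: "\<And>z. z \<notin> \<Gamma> \<Longrightarrow> u z \<le> (\<integral>y. u y \<partial>st z)"
  shows "u z \<le> (\<integral>\<omega>. u (stopped \<Gamma> z \<omega> n) \<partial>stream_space (measure_pmf (Pi_pmf UNIV undefined st)))"
proof (induction n arbitrary: z)
  define D where "D = Pi_pmf UNIV undefined st"
  interpret S: prob_space "stream_space (measure_pmf D)"
    by (rule prob_space.prob_space_stream_space[OF prob_space_measure_pmf])
  case 0 show ?case by (simp add: S.prob_space D_def[symmetric])
next
  define D where "D = Pi_pmf UNIV undefined st"
  interpret S: prob_space "stream_space (measure_pmf D)"
    by (rule prob_space.prob_space_stream_space[OF prob_space_measure_pmf])
  case (Suc n)
  show ?case
  proof (cases "z \<in> \<Gamma>")
    case True thus ?thesis by (simp add: S.prob_space D_def[symmetric])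
  next
    case False
    define B where "B = (\<Sum>y\<in>UNIV. \<bar>u y\<bar>)"
    have bnd: "\<And>y. \<bar>u y\<bar> \<le> B" unfolding B_def by (rule member_le_sum) auto
    have "u z \<le> (\<integral>y. u y \<partial>st z)" by (rule step[OF False])
    also have "\<dots> = (\<integral>y. u y \<partial>map_pmf (\<lambda>F. F z) D)"
      by (simp add: D_def Pi_pmf_component)
    also have "\<dots> = (\<integral>F. u (F z) \<partial>D)" by simp
    also have "\<dots> \<le> (\<integral>F. (\<integral>\<omega>. u (stopped \<Gamma> (F z) \<omega> n) \<partial>stream_space (measure_pmf D)) \<partial>D)"
      by (rule integral_mono) (auto intro: integrable_measure_pmf_finite Suc.IH[unfolded D_def[symmetric]])
    also have "\<dots> = (\<integral>\<omega>. u (stopped \<Gamma> z \<omega> (Suc n)) \<partial>stream_space (measure_pmf D))"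
    proof -
      have m: "(\<lambda>\<omega>. u (stopped \<Gamma> z \<omega> (Suc n))) \<in> borel_measurable (stream_space (measure_pmf D))"
        by (rule meas_real[OF meas_stopped])
      show ?thesis
        using prob_space.integral_stream_space_real[OF prob_space_measure_pmf m, of B] bnd False by simp
    qed
    finally show ?thesis by (simp add: D_def)
  qed
qed

lemma tail_stopped:
  fixes st :: "'a::finite \<Rightarrow> 'a pmf"
  assumes step: "\<And>z. z \<notin> \<Gamma> \<Longrightarrow> c \<le> measure_pmf.prob (st z) \<Gamma>" and c: "0 \<le> c" "c \<le> 1"
  shows "(\<integral>\<omega>. (indicator (-\<Gamma>) (stopped \<Gamma> z \<omega> n) :: real) \<partial>stream_space (measure_pmf (Pi_pmf UNIV undefined st))) \<le> (1-c)^n"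
proof (induction n arbitrary: z)
  define D where "D = Pi_pmf UNIV undefined st"
  interpret S: prob_space "stream_space (measure_pmf D)"
    by (rule prob_space.prob_space_stream_space[OF prob_space_measure_pmf])
  case 0 show ?case by (simp add: S.prob_space D_def[symmetric] indicator_def)
next
  define D where "D = Pi_pmf UNIV undefined st"
  interpret S: prob_space "stream_space (measure_pmf D)"
    by (rule prob_space.prob_space_stream_space[OF prob_space_measure_pmf])
  case (Suc n)
  show ?case
  proof (cases "z \<in> \<Gamma>")
    case True thus ?thesis using c by (simp add: D_def[symmetric])
  next
    case False
    define Q where "Q y = (\<integral>\<omega>. (indicator (-\<Gamma>) (stopped \<Gamma> y \<omega> n) :: real) \<partial>stream_space (measure_pmf D))" for y
    have Qb: "Q y \<le> (1-c)^n * (indicator (-\<Gamma>) y :: real)" for y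
    proof (cases "y \<in> \<Gamma>")
      case True thus ?thesis by (simp add: Q_def stopped_in)
    next
      case False thus ?thesis using Suc.IH[of y] by (simp add: Q_def D_def)
    qed
    have "(\<integral>\<omega>. (indicator (-\<Gamma>) (stopped \<Gamma> z \<omega> (Suc n)) :: real) \<partial>stream_space (measure_pmf D)) = (\<integral>F. Q (F z) \<partial>D)"
    proof -
      have m: "(\<lambda>\<omega>. (indicator (-\<Gamma>) (stopped \<Gamma> z \<omega> (Suc n)) :: real)) \<in> borel_measurable (stream_space (measure_pmf D))"
        by (rule meas_real[OF meas_stopped])
      show ?thesis
        using prob_space.integral_stream_space_real[OF prob_space_measure_pmf m, of 1] False by (simp add: Q_def)
    qed
    also have "\<dots> = (\<integral>y. Q y \<partial>map_pmf (\<lambda>F. F z) D)" by simp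
    also have "\<dots> = (\<integral>y. Q y \<partial>st z)"
      by (simp add: D_def Pi_pmf_component)
    also have "\<dots> \<le> (\<integral>y. (1-c)^n * (indicator (-\<Gamma>) y :: real) \<partial>st z)"
      by (rule integral_mono) (auto intro: integrable_measure_pmf_finite Qb)
    also have "\<dots> = (1-c)^n * measure_pmf.prob (st z) (-\<Gamma>)" by simp
    also have "measure_pmf.prob (st z) (-\<Gamma>) = 1 - measure_pmf.prob (st z) \<Gamma>"
      using measure_pmf.prob_compl[where A=\<Gamma> and M="st z", simplified] by (simp add: Compl_eq_Diff_UNIV)
    also have "(1-c)^n * (1 - measure_pmf.prob (st z) \<Gamma>) \<le> (1-c)^n * (1-c)"
      using step[OF False] c by (intro mult_left_mono) auto
    finally show ?thesis by (simp add: D_def mult.commute)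
  qed
qed


theorem mainTheorem3:
  fixes w :: "'a::finite \<Rightarrow> 'a \<Rightarrow> real"
    and p :: real and \<Gamma> :: "'a set" and g u :: "'a \<Rightarrow> real"
    and smax smin :: "'a \<Rightarrow> 'a" and x :: 'a
  assumes "weighted_graph w" and "connected_graph w"
    and "p \<ge> 2"
    and "A1 w \<Gamma>"
    and "solves_P p w \<Gamma> g u"
    and "\<And>z. z \<notin> \<Gamma> \<Longrightarrow> smax z \<in> nbrs w z \<and> (\<forall>y\<in>nbrs w z. u y \<le> u (smax z))"
    and "\<And>z. z \<notin> \<Gamma> \<Longrightarrow> smin z \<in> nbrs w z \<inter> \<Gamma> \<and> (\<forall>y\<in>nbrs w z \<inter> \<Gamma>. g (smin z) \<le> g y)"
  shows "u x - g x \<le>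
    (\<integral>\<omega>. g (proc x \<omega> (hit_time \<Gamma> x \<omega>)) - g x \<partial>innov_space p w \<Gamma> smax smin)"
proof -
  note wg = assms(1) and p = assms(3) and sol = assms(5) and smx = assms(6) and smn = assms(7)
  define st where "st = step_pmf p w \<Gamma> smax smin"
  define D where "D = Pi_pmf UNIV undefined st"
  define S where "S = stream_space (measure_pmf D)"
  have SI: "innov_space p w \<Gamma> smax smin = S" by (simp add: innov_space_def S_def D_def st_def)
  interpret S: prob_space S unfolding S_def
    by (rule prob_space.prob_space_stream_space[OF prob_space_measure_pmf])
  have sub: "u z \<le> (\<integral>y. u y \<partial>st z)" if "z \<notin> \<Gamma>" for z
    unfolding st_def using smx[OF that] smn[OF that]
    by (intro step_ineq[OF wg p sol that]) auto
  have pos: "0 < measure_pmf.prob (st z) \<Gamma>" if "z \<notin> \<Gamma>" for z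
    unfolding st_def using smn[OF that] by (intro step_pos[OF wg p that]) auto
  define c where "c = Min (insert 1 ((\<lambda>z. measure_pmf.prob (st z) \<Gamma>) ` (-\<Gamma>)))"
  have c0: "0 < c" unfolding c_def using pos by (subst Min_gr_iff) auto
  have c1: "c \<le> 1" unfolding c_def by (rule Min_le) auto
  have cz: "c \<le> measure_pmf.prob (st z) \<Gamma>" if "z \<notin> \<Gamma>" for z
    unfolding c_def using that by (intro Min_le) auto
  define B where "B = (\<Sum>y\<in>UNIV. \<bar>u y\<bar>) + (\<Sum>y\<in>UNIV. \<bar>g y\<bar>)"
  have bu: "\<bar>u y\<bar> \<le> B" for y
  proof -
    have "\<bar>u y\<bar> \<le> (\<Sum>y\<in>UNIV. \<bar>u y\<bar>)" by (rule member_le_sum) auto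
    moreover have "0 \<le> (\<Sum>y\<in>UNIV. \<bar>g y\<bar>)" by (rule sum_nonneg) auto
    ultimately show ?thesis unfolding B_def by linarith
  qed
  have bg: "\<bar>g y\<bar> \<le> B" for y
  proof -
    have "\<bar>g y\<bar> \<le> (\<Sum>y\<in>UNIV. \<bar>g y\<bar>)" by (rule member_le_sum) auto
    moreover have "0 \<le> (\<Sum>y\<in>UNIV. \<bar>u y\<bar>)" by (rule sum_nonneg) auto
    ultimately show ?thesis unfolding B_def by linarith
  qed
  have B0: "0 \<le> B" using bu[of x] by linarith
  define G where "G \<omega> = g (proc x \<omega> (hit_time \<Gamma> x \<omega>))" for \<omega>
  have Gm: "G \<in> borel_measurable S" unfolding G_def S_def by (rule meas_real[OF meas_hitproc])
  have Gi: "integrable S G" by (rule S.integrable_const_bound[where B=B]) (auto simp: G_def bg Gm)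
  have bound: "u x \<le> (\<integral>\<omega>. G \<omega> \<partial>S) + 2 * B * (1-c)^n" for n
  proof -
    define Y where "Y \<omega> = stopped \<Gamma> x \<omega> n" for \<omega>
    have Ym: "Y \<in> measurable S (count_space UNIV)" unfolding Y_def S_def by (rule meas_stopped)
    have i1: "integrable S (\<lambda>\<omega>. u (Y \<omega>))"
      by (rule S.integrable_const_bound[where B=B]) (auto simp: bu intro: meas_real[OF Ym])
    have i2: "integrable S (\<lambda>\<omega>. (indicator (-\<Gamma>) (Y \<omega>) :: real))"
      by (rule S.integrable_const_bound[where B=1]) (auto intro: meas_real[OF Ym])
    have pw: "u (Y \<omega>) \<le> G \<omega> + 2 * B * (indicator (-\<Gamma>) (Y \<omega>) :: real)" for \<omega>
    proof (cases "Y \<omega> \<in> \<Gamma>")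
      case True
      then have "Y \<omega> = proc x \<omega> (hit_time \<Gamma> x \<omega>)" unfolding Y_def by (rule stopped_hit)
      moreover have "u (Y \<omega>) = g (Y \<omega>)" using sol True by (simp add: solves_P_def)
      ultimately show ?thesis using True by (simp add: G_def)
    next
      case False
      have "u (Y \<omega>) \<le> B" "- G \<omega> \<le> B" using bu[of "Y \<omega>"] bg[of "proc x \<omega> (hit_time \<Gamma> x \<omega>)"]
        by (auto simp: G_def)
      then show ?thesis using False by simp
    qed
    have "u x \<le> (\<integral>\<omega>. u (Y \<omega>) \<partial>S)"
      unfolding Y_def S_def D_def using sub by (rule sub_stopped)
    also have "\<dots> \<le> (\<integral>\<omega>. G \<omega> + 2 * B * (indicator (-\<Gamma>) (Y \<omega>) :: real) \<partial>S)"
      by (rule integral_mono[OF i1 _ pw]) (intro Bochner_Integration.integrable_add Gi integrable_mult_right i2)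
    also have "\<dots> = (\<integral>\<omega>. G \<omega> \<partial>S) + 2 * B * (\<integral>\<omega>. (indicator (-\<Gamma>) (Y \<omega>) :: real) \<partial>S)"
      using Gi i2 by simp
    also have "(\<integral>\<omega>. (indicator (-\<Gamma>) (Y \<omega>) :: real) \<partial>S) \<le> (1-c)^n"
      unfolding Y_def S_def D_def using cz c0 c1 by (intro tail_stopped) auto
    finally show ?thesis using B0 by (smt (verit) mult_left_mono)
  qed
  have lim: "(\<lambda>n. (\<integral>\<omega>. G \<omega> \<partial>S) + 2 * B * (1-c)^n) \<longlonglongrightarrow> (\<integral>\<omega>. G \<omega> \<partial>S) + 2 * B * 0"
    using c0 c1 by (intro tendsto_intros LIMSEQ_power_zero) auto
  have main: "u x \<le> (\<integral>\<omega>. G \<omega> \<partial>S)"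
    using LIMSEQ_le_const[OF lim] bound by auto
  have "(\<integral>\<omega>. G \<omega> - g x \<partial>S) = (\<integral>\<omega>. G \<omega> \<partial>S) - g x"
    using Gi by (simp add: Bochner_Integration.integral_diff S.prob_space)
  then show ?thesis using main by (simp add: SI G_def)
qed

end
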